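(* For every non-empty partial metric space $(X,p_X)$ there exists a p-Cauchy completion $(\tilde X,i)$ of $X$ such that $i(X)$ is not symmetrically dense in $\tilde X$.
   Context: A partial metric on a set $X$ is a function $p_X\colon X\times X\to\mathbb{R}_{\geq0}$ such that for all $x,y,z\in X$: (P1) $p_X(x,x)=p_X(x,y)=p_X(y,y)$ implies $x=y$; (P2) $p_X(x,x)\leq p_X(x,y)$; (P3) $p_X(x,y)=p_X(y,x)$; (P4) $p_X(x,z)+p_X(y,y)\leq p_X(x,y)+p_X(y,z)$. For $x\in X$ and $\varepsilon>0$, $B_\varepsilon(x)=\{y\in X: p_X(x,y)<p_X(x,x)+\varepsilon\}$. A subset $A\subseteq X$ is dense in $X$ if for every $x\in X$ and $\varepsilon>0$ there is $y\in A$ with $y\in B_\varepsilon(x)$; it is symmetrically dense if for every $x\in X$ and $\varepsilon>0$ there is $y\in A$ with $x\in B_\varepsilon(y)$ and $y\in B_\varepsilon(x)$. A sequence $(x_n)$ in $X$ p-converges to $x\in X$ if $p_X(x,x)=\lim_{n\to\infty}p_X(x,x_n)=\lim_{n\to\infty}p_X(x_n,x_n)$; it is p-Cauchy if $\lim_{n,m\to\infty}p_X(x_n,x_m)$ exists and is finite. $X$ is p-Cauchy complete if every p-Cauchy sequence p-converges. An isometric embedding $i\colon X\to Y$ between partial metric spaces is a map with $p_Y(i(x),i(y))=p_X(x,y)$ for all $x,y$. A p-Cauchy completion of $X$ is a pair $(\bar X,i)$ where $\bar X$ is a p-Cauchy complete partial metric space and $i\colon X\to\bar X$ is an isometric embedding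 with $i(X)$ dense in $\bar X$. *)

theory Defs
  imports Complex_Main
begin

definition partial_metric :: "'a set \<Rightarrow> ('a \<Rightarrow> 'a \<Rightarrow> real) \<Rightarrow> bool" where
  "partial_metric X p \<longleftrightarrow>
     (\<forall>x\<in>X. \<forall>y\<in>X. 0 \<le> p x y) \<and>
     (\<forall>x\<in>X. \<forall>y\<in>X. p x x = p x y \<and> p x y = p y y \<longrightarrow> x = y) \<and>
     (\<forall>x\<in>X. \<forall>y\<in>X. p x x \<le> p x y) \<and>
     (\<forall>x\<in>X. \<forall>y\<in>X. p x y = p y x) \<and>
     (\<forall>x\<in>X. \<forall>y\<in>X. \<forall>z\<in>X. p x z + p y y \<le> p x y + p y z)"

definition pball :: "'a set \<Rightarrow> ('a \<Rightarrow> 'a \<Rightarrow> real) \<Rightarrow> 'a \<Rightarrow> real \<Rightarrow> 'a set" where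
  "pball X p x \<epsilon> = {y\<in>X. p x y < p x x + \<epsilon>}"

definition p_dense :: "'a set \<Rightarrow> ('a \<Rightarrow> 'a \<Rightarrow> real) \<Rightarrow> 'a set \<Rightarrow> bool" where
  "p_dense X p A \<longleftrightarrow> A \<subseteq> X \<and>
     (\<forall>x\<in>X. \<forall>\<epsilon>>0. \<exists>y\<in>A. y \<in> pball X p x \<epsilon>)"

definition p_sym_dense :: "'a set \<Rightarrow> ('a \<Rightarrow> 'a \<Rightarrow> real) \<Rightarrow> 'a set \<Rightarrow> bool" where
  "p_sym_dense X p A \<longleftrightarrow> A \<subseteq> X \<and>
     (\<forall>x\<in>X. \<forall>\<epsilon>>0. \<exists>y\<in>A. x \<in> pball X p y \<epsilon> \<and> y \<in> pball X p x \<epsilon>)"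

definition p_converges :: "('a \<Rightarrow> 'a \<Rightarrow> real) \<Rightarrow> (nat \<Rightarrow> 'a) \<Rightarrow> 'a \<Rightarrow> bool" where
  "p_converges p s x \<longleftrightarrow>
     (\<lambda>n. p x (s n)) \<longlonglongrightarrow> p x x \<and> (\<lambda>n. p (s n) (s n)) \<longlonglongrightarrow> p x x"

definition p_Cauchy :: "('a \<Rightarrow> 'a \<Rightarrow> real) \<Rightarrow> (nat \<Rightarrow> 'a) \<Rightarrow> bool" where
  "p_Cauchy p s \<longleftrightarrow>
     (\<exists>L::real. \<forall>\<epsilon>>0. \<exists>N. \<forall>n\<ge>N. \<forall>m\<ge>N. \<bar>p (s n) (s m) - L\<bar> < \<epsilon>)"

definition p_Cauchy_complete :: "'a set \<Rightarrow> ('a \<Rightarrow> 'a \<Rightarrow> real) \<Rightarrow> bool" where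
  "p_Cauchy_complete X p \<longleftrightarrow>
     (\<forall>s. (\<forall>n. s n \<in> X) \<and> p_Cauchy p s \<longrightarrow> (\<exists>x\<in>X. p_converges p s x))"

definition isometric_embedding ::
  "'a set \<Rightarrow> ('a \<Rightarrow> 'a \<Rightarrow> real) \<Rightarrow> 'b set \<Rightarrow> ('b \<Rightarrow> 'b \<Rightarrow> real) \<Rightarrow> ('a \<Rightarrow> 'b) \<Rightarrow> bool" where
  "isometric_embedding X p Y q i \<longleftrightarrow>
     i ` X \<subseteq> Y \<and> (\<forall>x\<in>X. \<forall>y\<in>X. q (i x) (i y) = p x y)"

definition p_Cauchy_completion ::
  "'a set \<Rightarrow> ('a \<Rightarrow> 'a \<Rightarrow> real) \<Rightarrow> 'b set \<Rightarrow> ('b \<Rightarrow> 'b \<Rightarrow> real) \<Rightarrow> ('a \<Rightarrow> 'b) \<Rightarrow> bool" where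
  "p_Cauchy_completion X p Y q i \<longleftrightarrow>
     partial_metric Y q \<and> p_Cauchy_complete Y q \<and>
     isometric_embedding X p Y q i \<and> p_dense Y q (i ` X)"

end

theory Submission
  imports Defs
begin


lemma pmD:
  assumes "partial_metric X p"
  shows "\<And>x y. x\<in>X \<Longrightarrow> y\<in>X \<Longrightarrow> 0 \<le> p x y"
    and "\<And>x y. x\<in>X \<Longrightarrow> y\<in>X \<Longrightarrow> p x x = p x y \<Longrightarrow> p x y = p y y \<Longrightarrow> x = y"
    and "\<And>x y. x\<in>X \<Longrightarrow> y\<in>X \<Longrightarrow> p x x \<le> p x y"
    and "\<And>x y. x\<in>X \<Longrightarrow> y\<in>X \<Longrightarrow> p x y = p y x"
    and "\<And>x y z. x\<in>X \<Longrightarrow> y\<in>X \<Longrightarrow> z\<in>X \<Longrightarrow> p x z + p y y \<le> p x y + p y z"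
  using assms unfolding partial_metric_def by blast+

lemma pm_bnd:
  assumes "partial_metric X p" "a\<in>X" "b\<in>X" "c\<in>X"
  shows "\<bar>p a c - p b c\<bar> \<le> (p a b - p a a) + (p a b - p b b)"
proof -
  note D = pmD[OF assms(1)]
  have "p b c + p a a \<le> p b a + p a c" using D(5)[OF assms(3,2,4)] .
  moreover have "p a c + p b b \<le> p a b + p b c" using D(5)[OF assms(2,3,4)] .
  moreover have "p a a \<le> p a b" using D(3)[OF assms(2,3)] .
  moreover have "p b b \<le> p b a" using D(3)[OF assms(3,2)] .
  moreover have "p b a = p a b" using D(4)[OF assms(3,2)] .
  ultimately show ?thesis by linarith
qed

lemma squeeze0:
  fixes f g :: "nat \<Rightarrow> real"
  assumes "\<And>k. \<bar>f k\<bar> \<le> g k" "g \<longlonglongrightarrow> 0"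
  shows "f \<longlonglongrightarrow> 0"
  unfolding LIMSEQ_iff
proof (intro allI impI)
  fix r :: real assume "r > 0"
  then obtain N where "\<forall>n\<ge>N. norm (g n - 0) < r" using assms(2) unfolding LIMSEQ_iff by blast
  then show "\<exists>no. \<forall>n\<ge>no. norm (f n - 0) < r" using assms(1)
    by (smt (verit) diff_zero real_norm_def)
qed

lemma approx_seq:
  assumes pm: "partial_metric Y q" and a: "\<And>k. a k \<in> Y" and b: "\<And>k. b k \<in> Y"
    and u: "(\<lambda>k. q (a k) (b k) - q (a k) (a k)) \<longlonglongrightarrow> 0"
    and v: "(\<lambda>k. q (a k) (b k) - q (b k) (b k)) \<longlonglongrightarrow> 0"
  shows "p_Cauchy q a \<Longrightarrow> p_Cauchy q b"
    and "y \<in> Y \<Longrightarrow> p_converges q b y \<Longrightarrow> p_converges q a y"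
proof -
  note D = pmD[OF pm]
  define w where "w k = (q (a k) (b k) - q (a k) (a k)) + (q (a k) (b k) - q (b k) (b k))" for k
  have w0: "w \<longlonglongrightarrow> 0" unfolding w_def using tendsto_add[OF u v] by simp
  have wb: "\<bar>q (a k) c - q (b k) c\<bar> \<le> w k" if "c \<in> Y" for k c
    unfolding w_def using pm_bnd[OF pm a b that] .
  have wb2: "\<bar>q (a k) (a k) - q (b k) (b k)\<bar> \<le> w k" for k
    unfolding w_def using D(3)[OF a[of k] b[of k]] D(3)[OF b[of k] a[of k]] D(4)[OF a[of k] b[of k]] by linarith
  show "p_Cauchy q b" if ca: "p_Cauchy q a"
  proof -
    obtain L where L: "\<forall>\<epsilon>>0. \<exists>N. \<forall>n\<ge>N. \<forall>m\<ge>N. \<bar>q (a n) (a m) - L\<bar> < \<epsilon>"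
      using ca unfolding p_Cauchy_def by blast
    show ?thesis unfolding p_Cauchy_def
    proof (rule exI[of _ L], intro allI impI)
      fix e :: real assume e: "e > 0"
      obtain N1 where N1: "\<forall>n\<ge>N1. \<forall>m\<ge>N1. \<bar>q (a n) (a m) - L\<bar> < e/2" using L e by (meson half_gt_zero)
      obtain N2 where N2: "\<forall>n\<ge>N2. norm (w n - 0) < e/4" using w0 e unfolding LIMSEQ_iff by (meson divide_pos_pos zero_less_numeral)
      show "\<exists>N. \<forall>n\<ge>N. \<forall>m\<ge>N. \<bar>q (b n) (b m) - L\<bar> < e"
      proof (intro exI allI impI)
        fix n m assume "max N1 N2 \<le> n" "max N1 N2 \<le> m"
        then have h1: "\<bar>q (a n) (a m) - L\<bar> < e/2" and h2: "w n < e/4" and h3: "w m < e/4"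
          using N1 N2 by auto
        have "\<bar>q (a n) (b m) - q (b n) (b m)\<bar> \<le> w n" using wb[OF b] .
        moreover have "\<bar>q (a m) (a n) - q (b m) (a n)\<bar> \<le> w m" using wb[OF a] .
        moreover have "q (a m) (a n) = q (a n) (a m)" using D(4)[OF a a] .
        moreover have "q (b m) (a n) = q (a n) (b m)" using D(4)[OF b a] .
        ultimately show "\<bar>q (b n) (b m) - L\<bar> < e" using h1 h2 h3 by linarith
      qed
    qed
  qed
  show "p_converges q a y" if y: "y \<in> Y" and c: "p_converges q b y"
  proof -
    have d1: "(\<lambda>k. q y (a k) - q y (b k)) \<longlonglongrightarrow> 0"
    proof (rule squeeze0[OF _ w0])
      fix k
      have "q y (a k) = q (a k) y" "q y (b k) = q (b k) y" using D(4)[OF y a] D(4)[OF y b] by auto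
      then show "\<bar>q y (a k) - q y (b k)\<bar> \<le> w k" using wb[OF y] by simp
    qed
    have 1: "(\<lambda>k. q y (a k)) \<longlonglongrightarrow> q y y"
      using tendsto_add[OF d1, of "\<lambda>k. q y (b k)" "q y y"] c unfolding p_converges_def by simp
    have d2: "(\<lambda>k. q (a k) (a k) - q (b k) (b k)) \<longlonglongrightarrow> 0"
      by (rule squeeze0[OF wb2 w0])
    have 2: "(\<lambda>k. q (a k) (a k)) \<longlonglongrightarrow> q y y"
      using tendsto_add[OF d2, of "\<lambda>k. q (b k) (b k)" "q y y"] c unfolding p_converges_def by simp
    show ?thesis unfolding p_converges_def using 1 2 by blast
  qed
qed



definition pcs :: "'a set \<Rightarrow> ('a \<Rightarrow> 'a \<Rightarrow> real) \<Rightarrow> (nat \<Rightarrow> 'a) \<Rightarrow> bool" where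
  "pcs X p s \<longleftrightarrow> (\<forall>n. s n \<in> X) \<and> p_Cauchy p s"

definition dl :: "('a \<Rightarrow> 'a \<Rightarrow> real) \<Rightarrow> (nat \<Rightarrow> 'a) \<Rightarrow> (nat \<Rightarrow> 'a) \<Rightarrow> real" where
  "dl p s t = lim (\<lambda>n. p (s n) (t n))"

lemma pcs_diag:
  assumes "pcs X p s"
  shows "(\<lambda>n. p (s n) (s n)) \<longlonglongrightarrow> dl p s s"
proof -
  obtain L where L: "\<forall>\<epsilon>>0. \<exists>N. \<forall>n\<ge>N. \<forall>m\<ge>N. \<bar>p (s n) (s m) - L\<bar> < \<epsilon>"
    using assms unfolding pcs_def p_Cauchy_def by blast
  have "(\<lambda>n. p (s n) (s n)) \<longlonglongrightarrow> L" unfolding LIMSEQ_iff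
  proof (intro allI impI)
    fix r :: real assume "r > 0"
    then obtain N where "\<forall>n\<ge>N. \<forall>m\<ge>N. \<bar>p (s n) (s m) - L\<bar> < r" using L by blast
    then show "\<exists>no. \<forall>n\<ge>no. norm (p (s n) (s n) - L) < r" by auto
  qed
  then show ?thesis unfolding dl_def using limI by metis
qed

lemma pcs_L:
  assumes "pcs X p s"
  shows "\<forall>\<epsilon>>0. \<exists>N. \<forall>n\<ge>N. \<forall>m\<ge>N. \<bar>p (s n) (s m) - dl p s s\<bar> < \<epsilon>"
proof -
  obtain L where L: "\<forall>\<epsilon>>0. \<exists>N. \<forall>n\<ge>N. \<forall>m\<ge>N. \<bar>p (s n) (s m) - L\<bar> < \<epsilon>"
    using assms unfolding pcs_def p_Cauchy_def by blast
  have "(\<lambda>n. p (s n) (s n)) \<longlonglongrightarrow> L" unfolding LIMSEQ_iff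
  proof (intro allI impI)
    fix r :: real assume "r > 0"
    then obtain N where "\<forall>n\<ge>N. \<forall>m\<ge>N. \<bar>p (s n) (s m) - L\<bar> < r" using L by blast
    then show "\<exists>no. \<forall>n\<ge>no. norm (p (s n) (s n) - L) < r" by auto
  qed
  then have "L = dl p s s" using pcs_diag[OF assms] LIMSEQ_unique by blast
  then show ?thesis using L by simp
qed

lemma dl_conv:
  assumes pm: "partial_metric X p" and s: "pcs X p s" and t: "pcs X p t"
  shows "(\<lambda>n. p (s n) (t n)) \<longlonglongrightarrow> dl p s t"
proof -
  have sX: "\<And>n. s n \<in> X" and tX: "\<And>n. t n \<in> X" using s t unfolding pcs_def by auto
  note Ls = pcs_L[OF s] and Lt = pcs_L[OF t]
  have "Cauchy (\<lambda>n. p (s n) (t n))"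
  proof (rule CauchyI)
    fix e :: real assume e: "0 < e"
    then have e8: "e/8 > 0" by simp
    obtain N1 where N1: "\<forall>n\<ge>N1. \<forall>m\<ge>N1. \<bar>p (s n) (s m) - dl p s s\<bar> < e/8" using Ls e8 by blast
    obtain N2 where N2: "\<forall>n\<ge>N2. \<forall>m\<ge>N2. \<bar>p (t n) (t m) - dl p t t\<bar> < e/8" using Lt e8 by blast
    show "\<exists>M. \<forall>m\<ge>M. \<forall>n\<ge>M. norm (p (s m) (t m) - p (s n) (t n)) < e"
    proof (intro exI allI impI)
      fix m n assume "max N1 N2 \<le> m" "max N1 N2 \<le> n"
      then have a1: "\<bar>p (s m) (s n) - dl p s s\<bar> < e/8" "\<bar>p (s m) (s m) - dl p s s\<bar> < e/8"
         "\<bar>p (s n) (s n) - dl p s s\<bar> < e/8"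
        and a2: "\<bar>p (t m) (t n) - dl p t t\<bar> < e/8" "\<bar>p (t m) (t m) - dl p t t\<bar> < e/8"
         "\<bar>p (t n) (t n) - dl p t t\<bar> < e/8" using N1 N2 by auto
      have b1: "\<bar>p (s m) (t m) - p (s n) (t m)\<bar> \<le> (p (s m) (s n) - p (s m) (s m)) + (p (s m) (s n) - p (s n) (s n))"
        using pm_bnd[OF pm sX sX tX] .
      have b2: "\<bar>p (t m) (s n) - p (t n) (s n)\<bar> \<le> (p (t m) (t n) - p (t m) (t m)) + (p (t m) (t n) - p (t n) (t n))"
        using pm_bnd[OF pm tX tX sX] .
      have h1: "\<bar>p (s m) (t m) - p (s n) (t m)\<bar> < e/2"
        using a1[unfolded abs_less_iff] b1[unfolded abs_le_iff] unfolding abs_less_iff by linarith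
      have h2: "\<bar>p (t m) (s n) - p (t n) (s n)\<bar> < e/2"
        using a2[unfolded abs_less_iff] b2[unfolded abs_le_iff] unfolding abs_less_iff by linarith
      have "p (t m) (s n) = p (s n) (t m)" "p (t n) (s n) = p (s n) (t n)"
        using pmD(4)[OF pm tX sX] by auto
      then show "norm (p (s m) (t m) - p (s n) (t n)) < e"
        using h1[unfolded abs_less_iff] h2[unfolded abs_less_iff] unfolding real_norm_def abs_less_iff by linarith
    qed
  qed
  then show ?thesis unfolding dl_def using Cauchy_convergent_iff convergent_LIMSEQ_iff by blast
qed

lemma pcs_const: "partial_metric X p \<Longrightarrow> x \<in> X \<Longrightarrow> pcs X p (\<lambda>_. x)"
  unfolding pcs_def p_Cauchy_def by (intro conjI allI exI[of _ "p x x"]) auto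

lemma dl_const: "dl p (\<lambda>_. x) (\<lambda>_. y) = p x y"
  unfolding dl_def by simp

lemma dl_approx:
  assumes pm: "partial_metric X p" and s: "pcs X p s"
  shows "(\<lambda>k. dl p s (\<lambda>_. s k)) \<longlonglongrightarrow> dl p s s"
  unfolding LIMSEQ_iff
proof (intro allI impI)
  fix r :: real assume r: "r > 0"
  have sX: "\<And>n. s n \<in> X" using s unfolding pcs_def by auto
  obtain N where N: "\<forall>n\<ge>N. \<forall>m\<ge>N. \<bar>p (s n) (s m) - dl p s s\<bar> < r/2"
    using pcs_L[OF s] r by (meson half_gt_zero)
  show "\<exists>no. \<forall>n\<ge>no. norm (dl p s (\<lambda>_. s n) - dl p s s) < r"
  proof (intro exI allI impI)
    fix k assume k: "N \<le> k"
    have c: "(\<lambda>n. p (s n) (s k)) \<longlonglongrightarrow> dl p s (\<lambda>_. s k)"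
      using dl_conv[OF pm s pcs_const[OF pm sX]] .
    have Nk: "\<forall>n\<ge>N. \<bar>p (s n) (s k) - dl p s s\<bar> < r/2" using N k by blast
    have "dl p s (\<lambda>_. s k) \<le> dl p s s + r/2"
    proof (rule LIMSEQ_le[OF c tendsto_const], rule exI[of _ N], intro allI impI)
      fix n assume "N \<le> n"
      then have "\<bar>p (s n) (s k) - dl p s s\<bar> < r/2" using Nk by blast
      then show "p (s n) (s k) \<le> dl p s s + r/2" unfolding abs_less_iff by linarith
    qed
    moreover have "dl p s s - r/2 \<le> dl p s (\<lambda>_. s k)"
    proof (rule LIMSEQ_le[OF tendsto_const c], rule exI[of _ N], intro allI impI)
      fix n assume "N \<le> n"
      then have "\<bar>p (s n) (s k) - dl p s s\<bar> < r/2" using Nk by blast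
      then show "dl p s s - r/2 \<le> p (s n) (s k)" unfolding abs_less_iff by linarith
    qed
    ultimately show "norm (dl p s (\<lambda>_. s k) - dl p s s) < r" using r by simp
  qed
qed

lemma dl_props:
  assumes pm: "partial_metric X p" and s: "pcs X p s" and t: "pcs X p t" and u: "pcs X p u"
  shows "0 \<le> dl p s t" and "dl p s s \<le> dl p s t" and "dl p s t = dl p t s"
    and "dl p s u + dl p t t \<le> dl p s t + dl p t u"
proof -
  have sX: "\<And>n. s n \<in> X" and tX: "\<And>n. t n \<in> X" and uX: "\<And>n. u n \<in> X"
    using s t u unfolding pcs_def by auto
  note st = dl_conv[OF pm s t] and ss = dl_conv[OF pm s s] and ts = dl_conv[OF pm t s]
    and tt = dl_conv[OF pm t t] and su = dl_conv[OF pm s u] and tu = dl_conv[OF pm t u]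
  show "0 \<le> dl p s t"
    by (rule LIMSEQ_le_const[OF st]) (use pmD(1)[OF pm sX tX] in auto)
  show "dl p s s \<le> dl p s t"
    by (rule LIMSEQ_le[OF ss st]) (use pmD(3)[OF pm sX tX] in auto)
  have "(\<lambda>n. p (s n) (t n)) = (\<lambda>n. p (t n) (s n))" using pmD(4)[OF pm sX tX] by auto
  then show "dl p s t = dl p t s" using st ts LIMSEQ_unique by metis
  show "dl p s u + dl p t t \<le> dl p s t + dl p t u"
    by (rule LIMSEQ_le[OF tendsto_add[OF su tt] tendsto_add[OF st tu]])
      (use pmD(5)[OF pm sX tX uX] in auto)
qed



definition eqv :: "('a \<Rightarrow> 'a \<Rightarrow> real) \<Rightarrow> (nat \<Rightarrow> 'a) \<Rightarrow> (nat \<Rightarrow> 'a) \<Rightarrow> bool" where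
  "eqv p s t \<longleftrightarrow> dl p s t = dl p s s \<and> dl p s t = dl p t t"

definition cls :: "'a set \<Rightarrow> ('a \<Rightarrow> 'a \<Rightarrow> real) \<Rightarrow> (nat \<Rightarrow> 'a) \<Rightarrow> (nat \<Rightarrow> 'a) set" where
  "cls X p s = {t. pcs X p t \<and> eqv p t s}"

definition Y0 :: "'a set \<Rightarrow> ('a \<Rightarrow> 'a \<Rightarrow> real) \<Rightarrow> (nat \<Rightarrow> 'a) set set" where
  "Y0 X p = cls X p ` {s. pcs X p s}"

definition rep :: "(nat \<Rightarrow> 'a) set \<Rightarrow> (nat \<Rightarrow> 'a)" where
  "rep A = (SOME s. s \<in> A)"

definition qc :: "('a \<Rightarrow> 'a \<Rightarrow> real) \<Rightarrow> (nat \<Rightarrow> 'a) set \<Rightarrow> (nat \<Rightarrow> 'a) set \<Rightarrow> real" where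
  "qc p A B = dl p (rep A) (rep B)"

lemma respect:
  assumes pm: "partial_metric X p" and s: "pcs X p s" and s': "pcs X p s'" and t: "pcs X p t"
    and e: "eqv p s s'"
  shows "dl p s t = dl p s' t"
proof -
  note D1 = dl_props[OF pm s s' t] and D2 = dl_props[OF pm s' s t]
  have "dl p s' s = dl p s s'" using dl_props(3)[OF pm s' s s] by simp
  then show ?thesis using D1(4) D2(4) e unfolding eqv_def by linarith
qed

lemma self_cls: "pcs X p s \<Longrightarrow> s \<in> cls X p s"
  unfolding cls_def eqv_def by simp

lemma rep_cls:
  assumes "pcs X p s"
  shows "rep (cls X p s) \<in> cls X p s"
  unfolding rep_def using someI[of "\<lambda>x. x \<in> cls X p s", OF self_cls[OF assms]] .

lemma qc_cls:
  assumes pm: "partial_metric X p" and s: "pcs X p s" and t: "pcs X p t"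
  shows "qc p (cls X p s) (cls X p t) = dl p s t"
proof -
  define s' where "s' = rep (cls X p s)"
  define t' where "t' = rep (cls X p t)"
  have s': "pcs X p s'" "eqv p s' s" using rep_cls[OF s] unfolding s'_def cls_def by auto
  have t': "pcs X p t'" "eqv p t' t" using rep_cls[OF t] unfolding t'_def cls_def by auto
  have "dl p s' t' = dl p s t'" using respect[OF pm s'(1) s t'(1) s'(2)] .
  also have "\<dots> = dl p t' s" using dl_props(3)[OF pm s t'(1) s] .
  also have "\<dots> = dl p t s" using respect[OF pm t'(1) t s t'(2)] .
  also have "\<dots> = dl p s t" using dl_props(3)[OF pm t s s] by simp
  finally show ?thesis unfolding qc_def s'_def t'_def .
qed

lemma cls_eq:
  assumes pm: "partial_metric X p" and s: "pcs X p s" and t: "pcs X p t" and e: "eqv p s t"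
  shows "cls X p s = cls X p t"
proof -
  have "eqv p u s \<longleftrightarrow> eqv p u t" if u: "pcs X p u" for u
  proof -
    have "dl p u s = dl p s u" using dl_props(3)[OF pm u s u] .
    also have "\<dots> = dl p t u" using respect[OF pm s t u e] .
    also have "\<dots> = dl p u t" using dl_props(3)[OF pm t u u] .
    finally have 1: "dl p u s = dl p u t" .
    have 2: "dl p s s = dl p t t" using e unfolding eqv_def by simp
    show ?thesis unfolding eqv_def using 1 2 by simp
  qed
  then show ?thesis unfolding cls_def by auto
qed

lemma Y0_E:
  assumes "A \<in> Y0 X p"
  obtains s where "pcs X p s" "A = cls X p s"
  using assms unfolding Y0_def by auto

lemma Y0_pm:
  assumes pm: "partial_metric X p"
  shows "partial_metric (Y0 X p) (qc p)"
  unfolding partial_metric_def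
proof (intro conjI ballI impI)
  fix A B assume A: "A \<in> Y0 X p" and B: "B \<in> Y0 X p"
  obtain s where s: "pcs X p s" "A = cls X p s" using A by (rule Y0_E)
  obtain t where t: "pcs X p t" "B = cls X p t" using B by (rule Y0_E)
  have q: "qc p A B = dl p s t" "qc p A A = dl p s s" "qc p B B = dl p t t" "qc p B A = dl p t s"
    using qc_cls[OF pm] s t by auto
  show "0 \<le> qc p A B" using q dl_props(1)[OF pm s(1) t(1) t(1)] by simp
  show "qc p A A \<le> qc p A B" using q dl_props(2)[OF pm s(1) t(1) t(1)] by simp
  show "qc p A B = qc p B A" using q dl_props(3)[OF pm s(1) t(1) t(1)] by simp
  show "A = B" if "qc p A A = qc p A B \<and> qc p A B = qc p B B"
  proof -
    have "eqv p s t" unfolding eqv_def using that q by simp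
    then show ?thesis using cls_eq[OF pm s(1) t(1)] s t by simp
  qed
next
  fix A B C assume A: "A \<in> Y0 X p" and B: "B \<in> Y0 X p" and C: "C \<in> Y0 X p"
  obtain s where s: "pcs X p s" "A = cls X p s" using A by (rule Y0_E)
  obtain t where t: "pcs X p t" "B = cls X p t" using B by (rule Y0_E)
  obtain u where u: "pcs X p u" "C = cls X p u" using C by (rule Y0_E)
  show "qc p A C + qc p B B \<le> qc p A B + qc p B C"
    using qc_cls[OF pm] s t u dl_props(4)[OF pm s(1) t(1) u(1)] by simp
qed



lemma Y0_rep:
  assumes pm: "partial_metric X p" and A: "A \<in> Y0 X p"
  shows "pcs X p (rep A)" "A = cls X p (rep A)"
proof -
  obtain t where t: "pcs X p t" "A = cls X p t" using A by (rule Y0_E)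
  have r: "pcs X p (rep A)" "eqv p (rep A) t" using rep_cls[OF t(1)] t(2) unfolding cls_def by auto
  show "pcs X p (rep A)" by (rule r(1))
  show "A = cls X p (rep A)" using cls_eq[OF pm r(1) t(1) r(2)] t(2) by simp
qed

lemma Y0_complete:
  assumes pm: "partial_metric X p"
  shows "p_Cauchy_complete (Y0 X p) (qc p)"
  unfolding p_Cauchy_complete_def
proof (intro allI impI)
  fix a assume "(\<forall>n. a n \<in> Y0 X p) \<and> p_Cauchy (qc p) a"
  then have aY: "\<And>n. a n \<in> Y0 X p" and ca: "p_Cauchy (qc p) a" by auto
  define s where "s k = rep (a k)" for k
  have s: "pcs X p (s k)" "a k = cls X p (s k)" for k
    using Y0_rep[OF pm aY[of k]] unfolding s_def by auto
  have sX: "s k n \<in> X" for k n using s(1)[of k] unfolding pcs_def by auto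
  define g where "g k = inverse (real (Suc k))" for k
  have g0: "g \<longlonglongrightarrow> 0" unfolding g_def by (rule LIMSEQ_inverse_real_of_nat)
  have gpos: "g k > 0" for k unfolding g_def by simp
  have ex: "\<exists>n. \<bar>dl p (s k) (\<lambda>_. s k n) - dl p (s k) (s k)\<bar> < g k \<and>
              \<bar>p (s k n) (s k n) - dl p (s k) (s k)\<bar> < g k" for k
  proof -
    obtain N1 where N1: "\<forall>n\<ge>N1. norm (dl p (s k) (\<lambda>_. s k n) - dl p (s k) (s k)) < g k"
      using dl_approx[OF pm s(1)[of k]] gpos[of k] unfolding LIMSEQ_iff by blast
    obtain N2 where N2: "\<forall>n\<ge>N2. norm (p (s k n) (s k n) - dl p (s k) (s k)) < g k"
      using pcs_diag[OF s(1)[of k]] gpos[of k] unfolding LIMSEQ_iff by blast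
    show ?thesis using N1 N2 by (intro exI[of _ "max N1 N2"]) auto
  qed
  obtain nk where nk: "\<forall>k. \<bar>dl p (s k) (\<lambda>_. s k (nk k)) - dl p (s k) (s k)\<bar> < g k \<and>
              \<bar>p (s k (nk k)) (s k (nk k)) - dl p (s k) (s k)\<bar> < g k"
  proof -
    have "\<forall>k. \<exists>n. \<bar>dl p (s k) (\<lambda>_. s k n) - dl p (s k) (s k)\<bar> < g k \<and>
              \<bar>p (s k n) (s k n) - dl p (s k) (s k)\<bar> < g k" using ex by blast
    from choice[OF this] show ?thesis using that by blast
  qed
  define x where "x k = s k (nk k)" for k
  have xX: "x k \<in> X" for k unfolding x_def by (rule sX)
  define b where "b k = cls X p (\<lambda>_. x k)" for k
  have bc: "pcs X p (\<lambda>_. x k)" for k by (rule pcs_const[OF pm xX])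
  have bY: "b k \<in> Y0 X p" for k unfolding b_def Y0_def using bc by auto
  have qab: "qc p (a k) (b k) = dl p (s k) (\<lambda>_. x k)" for k
    unfolding b_def using s(2)[of k] qc_cls[OF pm s(1) bc] by simp
  have qaa: "qc p (a k) (a k) = dl p (s k) (s k)" for k
    using s(2)[of k] qc_cls[OF pm s(1) s(1)] by simp
  have qbb: "qc p (b n) (b m) = p (x n) (x m)" for n m
    unfolding b_def using qc_cls[OF pm bc bc] dl_const by simp
  have u: "(\<lambda>k. qc p (a k) (b k) - qc p (a k) (a k)) \<longlonglongrightarrow> 0"
  proof (rule squeeze0[OF _ g0])
    fix k show "\<bar>qc p (a k) (b k) - qc p (a k) (a k)\<bar> \<le> g k"
      using nk qab qaa unfolding x_def by (simp add: less_imp_le)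
  qed
  have g20: "(\<lambda>k. 2 * g k) \<longlonglongrightarrow> 0" using tendsto_mult[OF tendsto_const g0, of 2] by simp
  have v: "(\<lambda>k. qc p (a k) (b k) - qc p (b k) (b k)) \<longlonglongrightarrow> 0"
  proof (rule squeeze0[OF _ g20])
    fix k
    have h1: "\<bar>qc p (a k) (b k) - qc p (a k) (a k)\<bar> < g k"
      using nk qab qaa unfolding x_def by simp
    have h2: "\<bar>qc p (b k) (b k) - qc p (a k) (a k)\<bar> < g k"
      using nk qbb qaa unfolding x_def by simp
    show "\<bar>qc p (a k) (b k) - qc p (b k) (b k)\<bar> \<le> 2 * g k"
      using h1[unfolded abs_less_iff] h2[unfolded abs_less_iff] unfolding abs_le_iff by linarith
  qed
  note Ypm = Y0_pm[OF pm]
  have cb: "p_Cauchy (qc p) b" by (rule approx_seq(1)[OF Ypm aY bY u v ca])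
  then have cx: "p_Cauchy p x" unfolding p_Cauchy_def qbb .
  have px: "pcs X p x" unfolding pcs_def using cx xX by auto
  define y where "y = cls X p x"
  have yY: "y \<in> Y0 X p" unfolding y_def Y0_def using px by auto
  have "(\<lambda>k. qc p y (b k)) = (\<lambda>k. dl p x (\<lambda>_. x k))"
    unfolding y_def b_def using qc_cls[OF pm px bc] by simp
  moreover have "qc p y y = dl p x x" unfolding y_def using qc_cls[OF pm px px] .
  ultimately have c1: "(\<lambda>k. qc p y (b k)) \<longlonglongrightarrow> qc p y y" using dl_approx[OF pm px] by simp
  have c2: "(\<lambda>k. qc p (b k) (b k)) \<longlonglongrightarrow> qc p y y"
    unfolding qbb \<open>qc p y y = dl p x x\<close> using pcs_diag[OF px] .
  have "p_converges (qc p) b y" unfolding p_converges_def using c1 c2 by blast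
  then have "p_converges (qc p) a y" by (rule approx_seq(2)[OF Ypm aY bY u v yY])
  then show "\<exists>y\<in>Y0 X p. p_converges (qc p) a y" using yY by blast
qed

lemma completion_exists:
  assumes pm: "partial_metric X p"
  shows "p_Cauchy_completion X p (Y0 X p) (qc p) (\<lambda>x. cls X p (\<lambda>_. x))"
  unfolding p_Cauchy_completion_def
proof (intro conjI)
  show "partial_metric (Y0 X p) (qc p)" by (rule Y0_pm[OF pm])
  show "p_Cauchy_complete (Y0 X p) (qc p)" by (rule Y0_complete[OF pm])
  show "isometric_embedding X p (Y0 X p) (qc p) (\<lambda>x. cls X p (\<lambda>_. x))"
    unfolding isometric_embedding_def
    using pcs_const[OF pm] qc_cls[OF pm] dl_const unfolding Y0_def by auto
  show "p_dense (Y0 X p) (qc p) ((\<lambda>x. cls X p (\<lambda>_. x)) ` X)"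
    unfolding p_dense_def
  proof (intro conjI ballI allI impI)
    show "(\<lambda>x. cls X p (\<lambda>_. x)) ` X \<subseteq> Y0 X p" using pcs_const[OF pm] unfolding Y0_def by auto
  next
    fix A and e :: real assume A: "A \<in> Y0 X p" and e: "e > 0"
    obtain s where s: "pcs X p s" "A = cls X p s" using A by (rule Y0_E)
    have sX: "s n \<in> X" for n using s unfolding pcs_def by auto
    obtain N where N: "\<forall>n\<ge>N. norm (dl p s (\<lambda>_. s n) - dl p s s) < e"
      using dl_approx[OF pm s(1)] e unfolding LIMSEQ_iff by blast
    have "qc p A (cls X p (\<lambda>_. s N)) = dl p s (\<lambda>_. s N)"
      using s(2) qc_cls[OF pm s(1) pcs_const[OF pm sX]] by simp
    moreover have "qc p A A = dl p s s" using s(2) qc_cls[OF pm s(1) s(1)] by simp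
    moreover have "cls X p (\<lambda>_. s N) \<in> Y0 X p" using pcs_const[OF pm sX] unfolding Y0_def by auto
    ultimately have "cls X p (\<lambda>_. s N) \<in> pball (Y0 X p) (qc p) A e"
      unfolding pball_def using N by auto
    then show "\<exists>y\<in>(\<lambda>x. cls X p (\<lambda>_. x)) ` X. y \<in> pball (Y0 X p) (qc p) A e"
      using sX by blast
  qed
qed



lemma top_ext:
  fixes X :: "'a set" and p and Y0 :: "'b set" and q0 and i :: "'a \<Rightarrow> 'b"
  assumes compl: "p_Cauchy_completion X p Y0 q0 i" and x0: "x0 \<in> X"
  defines "Y \<equiv> (\<lambda>A. (A, 0::real)) ` Y0 \<union> {(i x0, 1)}"
    and "q \<equiv> (\<lambda>a b. q0 (fst a) (fst b) + max (snd a) (snd b))"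
    and "j \<equiv> (\<lambda>x. (i x, 0::real))"
  shows "p_Cauchy_completion X p Y q j \<and> \<not> p_sym_dense Y q (j ` X)"
proof -
  have pm0: "partial_metric Y0 q0" and cc0: "p_Cauchy_complete Y0 q0"
    and ie0: "isometric_embedding X p Y0 q0 i" and de0: "p_dense Y0 q0 (i ` X)"
    using compl unfolding p_Cauchy_completion_def by auto
  note D = pmD[OF pm0]
  have iY: "i x \<in> Y0" if "x \<in> X" for x using ie0 that unfolding isometric_embedding_def by auto
  have iq: "q0 (i x) (i y) = p x y" if "x \<in> X" "y \<in> X" for x y
    using ie0 that unfolding isometric_embedding_def by auto
  have top: "(i x0, 1) \<in> Y" unfolding Y_def by simp
  have YE: "fst a \<in> Y0 \<and> (snd a = 0 \<or> snd a = 1) \<and> (snd a = 1 \<longrightarrow> a = (i x0, 1))" if "a \<in> Y" for a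
    using that iY[OF x0] unfolding Y_def by auto
  have qdef: "q a b = q0 (fst a) (fst b) + max (snd a) (snd b)" for a b unfolding q_def by simp
  have pmY: "partial_metric Y q"
    unfolding partial_metric_def
  proof (intro conjI ballI impI)
    fix a b assume a: "a \<in> Y" and b: "b \<in> Y"
    note ya = YE[OF a] and yb = YE[OF b]
    have f: "0 \<le> q0 (fst a) (fst b)" "q0 (fst a) (fst a) \<le> q0 (fst a) (fst b)"
      "q0 (fst b) (fst b) \<le> q0 (fst b) (fst a)" "q0 (fst a) (fst b) = q0 (fst b) (fst a)"
      using D(1)[of "fst a" "fst b"] D(3)[of "fst a" "fst b"] D(3)[of "fst b" "fst a"] D(4)[of "fst a" "fst b"]
        ya yb by auto
    show "0 \<le> q a b" unfolding qdef using f ya yb by auto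
    show "q a a \<le> q a b" unfolding qdef using f ya yb by auto
    show "q a b = q b a" unfolding qdef using f ya yb by auto
    show "a = b" if h: "q a a = q a b \<and> q a b = q b b"
    proof -
      have "snd a = snd b" using h f ya yb unfolding qdef by auto
      then have "q0 (fst a) (fst a) = q0 (fst a) (fst b) \<and> q0 (fst a) (fst b) = q0 (fst b) (fst b)"
        using h unfolding qdef by auto
      then have "fst a = fst b" using D(2)[of "fst a" "fst b"] ya yb by blast
      then show ?thesis using \<open>snd a = snd b\<close> by (simp add: prod_eq_iff)
    qed
  next
    fix a b c assume a: "a \<in> Y" and b: "b \<in> Y" and c: "c \<in> Y"
    note ya = YE[OF a] and yb = YE[OF b] and yc = YE[OF c]
    have "q0 (fst a) (fst c) + q0 (fst b) (fst b) \<le> q0 (fst a) (fst b) + q0 (fst b) (fst c)"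
      using D(5)[of "fst a" "fst b" "fst c"] ya yb yc by blast
    then show "q a c + q b b \<le> q a b + q b c" unfolding qdef using ya yb yc by auto
  qed
  have ccY: "p_Cauchy_complete Y q"
    unfolding p_Cauchy_complete_def
  proof (intro allI impI)
    fix z assume "(\<forall>n. z n \<in> Y) \<and> p_Cauchy q z"
    then have zY: "\<And>n. z n \<in> Y" and cz: "p_Cauchy q z" by auto
    obtain L where L: "\<forall>\<epsilon>>0. \<exists>N. \<forall>n\<ge>N. \<forall>m\<ge>N. \<bar>q (z n) (z m) - L\<bar> < \<epsilon>"
      using cz unfolding p_Cauchy_def by blast
    obtain N where N: "\<forall>n\<ge>N. \<forall>m\<ge>N. \<bar>q (z n) (z m) - L\<bar> < 1/2"
      using L[rule_format, of "1/2"] by auto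
    have nomix: False if "n \<ge> N" "m \<ge> N" "snd (z n) = 1" "snd (z m) = 0" for n m
    proof -
      have fm: "fst (z m) \<in> Y0" and fn: "fst (z n) \<in> Y0" using YE[OF zY[of m]] YE[OF zY[of n]] by auto
      have "q0 (fst (z m)) (fst (z m)) \<le> q0 (fst (z m)) (fst (z n))"
        using D(3)[OF fm fn] .
      moreover have "q0 (fst (z m)) (fst (z n)) = q0 (fst (z n)) (fst (z m))"
        using D(4)[OF fm fn] .
      moreover have "\<bar>q (z n) (z m) - L\<bar> < 1/2" "\<bar>q (z m) (z m) - L\<bar> < 1/2" using N that by auto
      ultimately show False using that unfolding qdef abs_less_iff by auto
    qed
    show "\<exists>y\<in>Y. p_converges q z y"
    proof (cases "\<exists>n\<ge>N. snd (z n) = 1")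
      case True
      then obtain n where n: "n \<ge> N" "snd (z n) = 1" by blast
      have "z m = (i x0, 1)" if "m \<ge> N" for m
        using nomix[OF n(1) that n(2)] YE[OF zY[of m]] by auto
      then have ev: "eventually (\<lambda>m. z m = (i x0, 1)) sequentially"
        unfolding eventually_sequentially by blast
      have "(\<lambda>m. q (i x0, 1) (z m)) \<longlonglongrightarrow> q (i x0, 1) (i x0, 1)"
        by (rule tendsto_eventually) (rule eventually_mono[OF ev], simp)
      moreover have "(\<lambda>m. q (z m) (z m)) \<longlonglongrightarrow> q (i x0, 1) (i x0, 1)"
        by (rule tendsto_eventually) (rule eventually_mono[OF ev], simp)
      ultimately show ?thesis using top unfolding p_converges_def by blast
    next
      case False
      then have s0: "snd (z m) = 0" if "m \<ge> N" for m using YE[OF zY[of m]] that by auto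
      define w where "w n = fst (z (n + N))" for n
      have wY: "w n \<in> Y0" for n unfolding w_def using YE[OF zY] by blast
      have qw: "q (z (n + N)) (z (m + N)) = q0 (w n) (w m)" for n m
        unfolding qdef w_def using s0[of "n+N"] s0[of "m+N"] by simp
      have "p_Cauchy q0 w" unfolding p_Cauchy_def
      proof (rule exI[of _ L], intro allI impI)
        fix e :: real assume "e > 0"
        then obtain N' where N': "\<forall>n\<ge>N'. \<forall>m\<ge>N'. \<bar>q (z n) (z m) - L\<bar> < e" using L by blast
        show "\<exists>N. \<forall>n\<ge>N. \<forall>m\<ge>N. \<bar>q0 (w n) (w m) - L\<bar> < e"
        proof (rule exI[of _ N'], intro allI impI)
          fix n m assume "N' \<le> n" "N' \<le> m"
          then show "\<bar>q0 (w n) (w m) - L\<bar> < e" using N'[rule_format, of "n+N" "m+N"] qw[of n m] by simp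
        qed
      qed
      then obtain y where y: "y \<in> Y0" "p_converges q0 w y" using cc0 wY unfolding p_Cauchy_complete_def by blast
      have yY: "(y, 0) \<in> Y" unfolding Y_def using y(1) by simp
      have e1: "(\<lambda>n. q (y, 0) (z (n + N))) = (\<lambda>n. q0 y (w n))"
        unfolding qdef w_def using s0 by auto
      have e2: "(\<lambda>n. q (z (n + N)) (z (n + N))) = (\<lambda>n. q0 (w n) (w n))"
        using qw by auto
      have qyy: "q (y, 0) (y, 0) = q0 y y" unfolding qdef by simp
      have "(\<lambda>n. q (y, 0) (z n)) \<longlonglongrightarrow> q (y, 0) (y, 0)"
        by (rule LIMSEQ_offset[of _ N]) (use y(2) e1 qyy in \<open>simp add: p_converges_def\<close>)
      moreover have "(\<lambda>n. q (z n) (z n)) \<longlonglongrightarrow> q (y, 0) (y, 0)"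
        by (rule LIMSEQ_offset[of _ N]) (use y(2) e2 qyy in \<open>simp add: p_converges_def\<close>)
      ultimately show ?thesis using yY unfolding p_converges_def by blast
    qed
  qed
  have jY: "j ` X \<subseteq> Y" unfolding j_def Y_def using iY by auto
  have ieY: "isometric_embedding X p Y q j"
    unfolding isometric_embedding_def using jY iq unfolding qdef j_def by auto
  have deY: "p_dense Y q (j ` X)"
    unfolding p_dense_def
  proof (intro conjI ballI allI impI jY)
    fix a and e :: real assume a: "a \<in> Y" and e: "e > 0"
    show "\<exists>y\<in>j ` X. y \<in> pball Y q a e"
    proof (cases "a = (i x0, 1)")
      case True
      have "j x0 \<in> pball Y q a e" using True e jY x0 unfolding pball_def qdef j_def by auto
      then show ?thesis using x0 by blast
    next
      case False
      then have a0: "snd a = 0" "fst a \<in> Y0" using YE[OF a] by auto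
      obtain y where y: "y \<in> i ` X" "y \<in> pball Y0 q0 (fst a) e"
        using de0 a0(2) e unfolding p_dense_def by blast
      then obtain x where x: "x \<in> X" "y = i x" by blast
      have "j x \<in> pball Y q a e" using y x a0 jY unfolding pball_def qdef j_def by auto
      then show ?thesis using x by blast
    qed
  qed
  have nsd: "\<not> p_sym_dense Y q (j ` X)"
  proof
    assume "p_sym_dense Y q (j ` X)"
    then have "\<forall>x\<in>Y. \<forall>\<epsilon>>0. \<exists>y\<in>j ` X. x \<in> pball Y q y \<epsilon> \<and> y \<in> pball Y q x \<epsilon>"
      unfolding p_sym_dense_def by blast
    then have "\<exists>y\<in>j ` X. (i x0, 1) \<in> pball Y q y 1 \<and> y \<in> pball Y q (i x0, 1) 1"
      using top by simp
    then obtain y where y: "y \<in> j ` X" "(i x0, 1) \<in> pball Y q y 1"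
      by blast
    then obtain x where x: "x \<in> X" "y = j x" by blast
    have "q0 (i x) (i x) \<le> q0 (i x) (i x0)" using D(3)[OF iY[OF x(1)] iY[OF x0]] .
    then show False using y(2) x unfolding pball_def qdef j_def by auto
  qed
  show ?thesis unfolding p_Cauchy_completion_def using pmY ccY ieY deY nsd by blast
qed

theorem theorem1p4:
  fixes X :: "'a set" and p :: "'a \<Rightarrow> 'a \<Rightarrow> real"
  assumes "partial_metric X p" and "X \<noteq> {}"
  shows "\<exists>(Y :: ((nat \<Rightarrow> 'a) set \<times> real) set) q i.
           p_Cauchy_completion X p Y q i \<and> \<not> p_sym_dense Y q (i ` X)"
proof -
  obtain x0 where x0: "x0 \<in> X" using assms(2) by blast
  show ?thesis using top_ext[OF completion_exists[OF assms(1)] x0] by blast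
qed

end
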